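(* Let $G$ be a $\tau$-regular undirected graph with node set $V$, adjacency matrix $A$, and a partition $V=S\cup T$, $S\cap T=\emptyset$, with exactly $m$ edges between $S$ and $T$. Consider the GNN $H_0=X\in\mathbb{R}^{|V|\times d}$, $H_{l+1}=\sigma(H_lW_{1l}^\top+AH_lW_{2l}^\top)$ for $l=0,1,\dots$, where $\sigma$ is the entrywise ReLU and $W_{1l},W_{2l}\in\mathbb{R}^{d\times d}$ satisfy $\|W_{1l}\|_{1\to1}\le1$, $\|W_{2l}\|_{1\to1}\le1$. Let $\alpha\in\mathbb{R}^{|V|\times d}$ satisfy $|\alpha_{ij}|\le\epsilon$ for $i\in S$ and $\alpha_{ij}=0$ for $i\in T$, and let $\varepsilon_l=H_l(X+\alpha)-H_l(X)$, where $H_l(\cdot)$ denotes the $l$-th layer output as a function of the input features. Then for every $l\ge0$ there exist $V_l\in\mathbb{R}^{d}_{\ge0}$ with $\|V_l\|_1\le d$ and $r_l\in\mathbb{R}^{|V|\times d}$ with $\sum_{i,j}|(r_l)_{ij}|\le 2d\epsilon m(l+1)(\tau+1)^l$ such that, entrywise, $$|(\varepsilon_l)_{ij}|\le \epsilon(\tau+1)^l\,(V_l)_j\,(\mathbf{1}_S)_i+(r_l)_{ij}\quad\text{for all } i\in V,\ j\in\{1,\dots,d\}.$$ In particular $\sum_{i\in T}\sum_j|(\varepsilon_l)_{ij}|\le 2d\epsilon m(l+1)(\tau+1)^l$.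
   Context: $\mathbf{1}_S\in\{0,1\}^{|V|}$ is the indicator vector of $S$. For $W\in\mathbb{R}^{d\times d}$, $\|W\|_{1\to1}=\max_k\sum_j|W_{jk}|$ is the operator norm induced by the $\ell_1$ norm (maximum absolute column sum). For a vector $V$, $\|V\|_1=\sum_j|V_j|$. *)

theory Defs
  imports Complex_Main
begin

text \<open>Node features are matrices indexed by a finite node type 'v and a finite
feature type 'd (so d = CARD('d)).\<close>

definition adj :: "('v \<Rightarrow> 'v \<Rightarrow> bool) \<Rightarrow> 'v \<Rightarrow> 'v \<Rightarrow> real" where
  "adj E i u = (if E i u then 1 else 0)"

definition relu :: "real \<Rightarrow> real" where
  "relu x = max 0 x"

primrec gnn :: "('v::finite \<Rightarrow> 'v \<Rightarrow> real) \<Rightarrow> (nat \<Rightarrow> 'd::finite \<Rightarrow> 'd \<Rightarrow> real)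
   \<Rightarrow> (nat \<Rightarrow> 'd \<Rightarrow> 'd \<Rightarrow> real) \<Rightarrow> nat \<Rightarrow> ('v \<Rightarrow> 'd \<Rightarrow> real) \<Rightarrow> 'v \<Rightarrow> 'd \<Rightarrow> real" where
  "gnn A W1 W2 0 X = X"
| "gnn A W1 W2 (Suc l) X = (\<lambda>i j. relu
      ((\<Sum>k\<in>UNIV. gnn A W1 W2 l X i k * W1 l j k)
       + (\<Sum>u\<in>UNIV. A i u * (\<Sum>k\<in>UNIV. gnn A W1 W2 l X u k * W2 l j k))))"

text \<open>Operator norm induced by the l1 norm: maximum absolute column sum.\<close>
definition norm11 :: "('d::finite \<Rightarrow> 'd \<Rightarrow> real) \<Rightarrow> real" where
  "norm11 W = Max (range (\<lambda>k. \<Sum>j\<in>UNIV. \<bar>W j k\<bar>))"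

end

theory Submission imports Defs begin

lemma relu_lip: "\<bar>relu a - relu b\<bar> \<le> \<bar>a - b\<bar>"
  unfolding relu_def by (auto simp: max_def)

lemma abs_sum_mult_le:
  fixes f :: "'a \<Rightarrow> real"
  shows "\<bar>\<Sum>k\<in>K. f k * w k\<bar> \<le> (\<Sum>k\<in>K. \<bar>f k\<bar> * \<bar>w k\<bar>)"
  by (metis (no_types, lifting) abs_mult sum_abs sum.cong)

lemma gnn_step_bound:
  fixes A :: "'v::finite \<Rightarrow> 'v \<Rightarrow> real" and X Y :: "'v \<Rightarrow> 'd::finite \<Rightarrow> real"
  assumes Ann: "\<And>i u. A i u \<ge> 0"
  shows "\<bar>gnn A W1 W2 (Suc l) Y i j - gnn A W1 W2 (Suc l) X i j\<bar>
    \<le> (\<Sum>k\<in>UNIV. \<bar>gnn A W1 W2 l Y i k - gnn A W1 W2 l X i k\<bar> * \<bar>W1 l j k\<bar>)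
     + (\<Sum>u\<in>UNIV. A i u * (\<Sum>k\<in>UNIV. \<bar>gnn A W1 W2 l Y u k - gnn A W1 W2 l X u k\<bar> * \<bar>W2 l j k\<bar>))"
proof -
  define D where "D = (\<lambda>u k. gnn A W1 W2 l Y u k - gnn A W1 W2 l X u k)"
  have eq: "((\<Sum>k\<in>UNIV. gnn A W1 W2 l Y i k * W1 l j k)
       + (\<Sum>u\<in>UNIV. A i u * (\<Sum>k\<in>UNIV. gnn A W1 W2 l Y u k * W2 l j k)))
     - ((\<Sum>k\<in>UNIV. gnn A W1 W2 l X i k * W1 l j k)
       + (\<Sum>u\<in>UNIV. A i u * (\<Sum>k\<in>UNIV. gnn A W1 W2 l X u k * W2 l j k)))
     = (\<Sum>k\<in>UNIV. D i k * W1 l j k) + (\<Sum>u\<in>UNIV. A i u * (\<Sum>k\<in>UNIV. D u k * W2 l j k))"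
    by (simp add: D_def left_diff_distrib right_diff_distrib sum_subtractf)
  have b1: "\<bar>\<Sum>k\<in>UNIV. D i k * W1 l j k\<bar> \<le> (\<Sum>k\<in>UNIV. \<bar>D i k\<bar> * \<bar>W1 l j k\<bar>)"
    by (rule abs_sum_mult_le)
  have b2: "\<bar>\<Sum>u\<in>UNIV. A i u * (\<Sum>k\<in>UNIV. D u k * W2 l j k)\<bar>
      \<le> (\<Sum>u\<in>UNIV. A i u * (\<Sum>k\<in>UNIV. \<bar>D u k\<bar> * \<bar>W2 l j k\<bar>))"
  proof -
    have "\<bar>\<Sum>u\<in>UNIV. A i u * (\<Sum>k\<in>UNIV. D u k * W2 l j k)\<bar>
       \<le> (\<Sum>u\<in>UNIV. \<bar>A i u\<bar> * \<bar>\<Sum>k\<in>UNIV. D u k * W2 l j k\<bar>)"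
      by (rule abs_sum_mult_le)
    also have "\<dots> \<le> (\<Sum>u\<in>UNIV. A i u * (\<Sum>k\<in>UNIV. \<bar>D u k\<bar> * \<bar>W2 l j k\<bar>))"
      by (rule sum_mono) (simp add: Ann abs_sum_mult_le mult_left_mono)
    finally show ?thesis .
  qed
  show ?thesis
    using relu_lip[of "(\<Sum>k\<in>UNIV. gnn A W1 W2 l Y i k * W1 l j k)
       + (\<Sum>u\<in>UNIV. A i u * (\<Sum>k\<in>UNIV. gnn A W1 W2 l Y u k * W2 l j k))"
       "(\<Sum>k\<in>UNIV. gnn A W1 W2 l X i k * W1 l j k)
       + (\<Sum>u\<in>UNIV. A i u * (\<Sum>k\<in>UNIV. gnn A W1 W2 l X u k * W2 l j k))"]
    unfolding eq using b1 b2 by (simp add: D_def)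
qed

lemma colsum_le:
  fixes W :: "'d::finite \<Rightarrow> 'd \<Rightarrow> real"
  assumes "norm11 W \<le> 1" "\<And>k. f k \<ge> 0"
  shows "(\<Sum>j\<in>UNIV. \<Sum>k\<in>UNIV. f k * \<bar>W j k\<bar>) \<le> (\<Sum>k\<in>UNIV. f k)"
proof -
  have c: "(\<Sum>j\<in>UNIV. \<bar>W j k\<bar>) \<le> 1" for k
  proof -
    have "(\<Sum>j\<in>UNIV. \<bar>W j k\<bar>) \<le> norm11 W" unfolding norm11_def
      by (rule Max_ge) auto
    thus ?thesis using assms(1) by simp
  qed
  have "(\<Sum>j\<in>UNIV. \<Sum>k\<in>UNIV. f k * \<bar>W j k\<bar>) = (\<Sum>k\<in>UNIV. f k * (\<Sum>j\<in>UNIV. \<bar>W j k\<bar>))"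
    by (subst sum.swap) (simp add: sum_distrib_left)
  also have "\<dots> \<le> (\<Sum>k\<in>UNIV. f k)"
    by (rule sum_mono) (simp add: assms(2) c mult_left_le)
  finally show ?thesis .
qed


lemma rowsum:
  assumes regular: "\<And>v. card {u. E v u} = \<tau>"
  shows "(\<Sum>u\<in>(UNIV::'v::finite set). adj E i u) = real \<tau>"
proof -
  have "(\<Sum>u\<in>(UNIV::'v set). adj E i u) = (\<Sum>u\<in>{u. E i u}. 1)"
    by (simp add: adj_def sum.If_cases)
  thus ?thesis using regular[of i] by simp
qed

lemma colsum:
  assumes sym: "\<And>u v. E u v \<Longrightarrow> E v u" and regular: "\<And>v. card {u. E v u} = \<tau>"
  shows "(\<Sum>i\<in>(UNIV::'v::finite set). adj E i u) = real \<tau>"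
proof -
  have "adj E i u = adj E u i" for i using sym by (auto simp: adj_def)
  thus ?thesis using rowsum[of E \<tau> u, OF regular] by simp
qed

lemma cutsum:
  fixes E :: "'v::finite \<Rightarrow> 'v \<Rightarrow> bool"
  assumes sym: "\<And>u v. E u v \<Longrightarrow> E v u"
    and part: "S \<union> T = UNIV" "S \<inter> T = {}"
    and cut: "card {(u, v). u \<in> S \<and> v \<in> T \<and> E u v} = m"
  shows "(\<Sum>i\<in>UNIV. of_bool (i \<in> T) * (\<Sum>u\<in>UNIV. adj E i u * of_bool (u \<in> S))) = real m"
proof -
  have "(\<Sum>i\<in>UNIV. of_bool (i \<in> T) * (\<Sum>u\<in>UNIV. adj E i u * of_bool (u \<in> S)))
     = (\<Sum>i\<in>UNIV. \<Sum>u\<in>UNIV. (if (u, i) \<in> {(u, v). u \<in> S \<and> v \<in> T \<and> E u v} then 1 else 0::real))"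
  proof (rule sum.cong[OF refl])
    fix i
    show "of_bool (i \<in> T) * (\<Sum>u\<in>UNIV. adj E i u * of_bool (u \<in> S))
       = (\<Sum>u\<in>UNIV. (if (u, i) \<in> {(u, v). u \<in> S \<and> v \<in> T \<and> E u v} then 1 else 0::real))"
      unfolding sum_distrib_left
      by (rule sum.cong[OF refl]) (auto simp: adj_def intro: sym)
  qed
  also have "\<dots> = (\<Sum>p\<in>UNIV \<times> UNIV. (if prod.swap p \<in> {(u, v). u \<in> S \<and> v \<in> T \<and> E u v} then 1 else 0::real))"
    unfolding sum.cartesian_product by (rule sum.cong) (auto split: if_splits)
  also have "\<dots> = (\<Sum>p\<in>(UNIV::('v\<times>'v) set). (if p \<in> {(u, v). u \<in> S \<and> v \<in> T \<and> E u v} then 1 else 0::real))"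
    by (rule sum.reindex_bij_witness[of _ prod.swap prod.swap]) auto
  also have "\<dots> = real m" using cut by (simp add: sum.If_cases)
  finally show ?thesis .
qed


definition Pr :: "('v::finite \<Rightarrow> 'd::finite \<Rightarrow> real) \<Rightarrow> 'v set \<Rightarrow> real \<Rightarrow> real \<Rightarrow> bool" where
  "Pr D S c B \<longleftrightarrow> (\<exists>V :: 'd \<Rightarrow> real. (\<forall>j. V j \<ge> 0) \<and> (\<Sum>j\<in>UNIV. V j) \<le> real (card (UNIV :: 'd set)) \<and>
     (\<exists>r. (\<forall>i j. r i j \<ge> 0) \<and> (\<Sum>i\<in>UNIV. \<Sum>j\<in>UNIV. r i j) \<le> B \<and>
        (\<forall>i j. \<bar>D i j\<bar> \<le> c * V j * of_bool (i \<in> S) + r i j)))"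

lemma step:
  fixes A :: "'v::finite \<Rightarrow> 'v \<Rightarrow> real" and X Y :: "'v \<Rightarrow> 'd::finite \<Rightarrow> real"
  assumes Ann: "\<And>i u. A i u \<ge> 0"
    and rows: "\<And>i. (\<Sum>u\<in>UNIV. A i u) = t"
    and cols: "\<And>u. (\<Sum>i\<in>UNIV. A i u) = t"
    and cuts: "(\<Sum>i\<in>UNIV. of_bool (i \<in> T) * (\<Sum>u\<in>UNIV. A i u * of_bool (u \<in> S))) = mm"
    and part: "S \<union> T = UNIV"
    and n1: "norm11 (W1 l) \<le> 1" and n2: "norm11 (W2 l) \<le> 1"
    and c0: "c \<ge> 0" and t0: "t \<ge> 0"
    and IH: "Pr (\<lambda>i j. gnn A W1 W2 l Y i j - gnn A W1 W2 l X i j) S c B"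
  shows "Pr (\<lambda>i j. gnn A W1 W2 (Suc l) Y i j - gnn A W1 W2 (Suc l) X i j) S (c * (t + 1))
          ((t + 1) * B + c * real (card (UNIV :: 'd set)) * mm)"
proof -
  define D where "D = (\<lambda>i j. gnn A W1 W2 l Y i j - gnn A W1 W2 l X i j)"
  define d where "d = real (card (UNIV :: 'd set))"
  from IH obtain V r where V0: "\<And>j. V j \<ge> 0" and Vs: "(\<Sum>j\<in>UNIV. V j) \<le> d"
    and r0: "\<And>i j. r i j \<ge> 0" and rs: "(\<Sum>i\<in>UNIV. \<Sum>j\<in>UNIV. r i j) \<le> B"
    and Db: "\<And>i j. \<bar>D i j\<bar> \<le> c * V j * of_bool (i \<in> S) + r i j"
    unfolding Pr_def D_def d_def by blast
  define N where "N = (\<lambda>i. \<Sum>u\<in>UNIV. A i u * of_bool (u \<in> S))"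
  define a1 where "a1 = (\<lambda>j. \<Sum>k\<in>UNIV. V k * \<bar>W1 l j k\<bar>)"
  define a2 where "a2 = (\<lambda>j. \<Sum>k\<in>UNIV. V k * \<bar>W2 l j k\<bar>)"
  define V' where "V' = (\<lambda>j. (a1 j + t * a2 j) / (t + 1))"
  define g1 where "g1 = (\<lambda>i j. \<Sum>k\<in>UNIV. r i k * \<bar>W1 l j k\<bar>)"
  define g2 where "g2 = (\<lambda>u j. \<Sum>k\<in>UNIV. r u k * \<bar>W2 l j k\<bar>)"
  define r' where "r' = (\<lambda>i j. g1 i j + (\<Sum>u\<in>UNIV. A i u * g2 u j) + of_bool (i \<in> T) * c * N i * a2 j)"
  have a10: "a1 j \<ge> 0" for j unfolding a1_def by (intro sum_nonneg) (simp add: V0)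
  have a20: "a2 j \<ge> 0" for j unfolding a2_def by (intro sum_nonneg) (simp add: V0)
  have g10: "g1 i j \<ge> 0" for i j unfolding g1_def by (intro sum_nonneg) (simp add: r0)
  have g20: "g2 i j \<ge> 0" for i j unfolding g2_def by (intro sum_nonneg) (simp add: r0)
  have N0: "N i \<ge> 0" for i unfolding N_def by (intro sum_nonneg) (simp add: Ann)
  have Nt: "N i \<le> t" for i
  proof -
    have "N i \<le> (\<Sum>u\<in>UNIV. A i u)" unfolding N_def
      by (rule sum_mono) (simp add: Ann mult_left_le)
    thus ?thesis using rows by simp
  qed
  have V'0: "V' j \<ge> 0" for j unfolding V'_def using a10 a20 t0 by simp
  have V's: "(\<Sum>j\<in>UNIV. V' j) \<le> d"
  proof -
    have "(\<Sum>j\<in>UNIV. V' j) = ((\<Sum>j\<in>UNIV. a1 j) + t * (\<Sum>j\<in>UNIV. a2 j)) / (t + 1)"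
      unfolding V'_def by (simp add: sum_divide_distrib[symmetric] sum.distrib sum_distrib_left)
    also have "\<dots> \<le> ((\<Sum>j\<in>UNIV. V j) + t * (\<Sum>j\<in>UNIV. V j)) / (t + 1)"
      using colsum_le[OF n1, of V] colsum_le[OF n2, of V] V0 t0 unfolding a1_def a2_def
      by (intro divide_right_mono add_mono mult_left_mono) auto
    also have "\<dots> = (\<Sum>j\<in>UNIV. V j)" using t0 by (simp add: field_simps)
    finally show ?thesis using Vs by simp
  qed
  have r'0: "r' i j \<ge> 0" for i j unfolding r'_def
    using g10 g20 N0 a20 c0 Ann by (intro add_nonneg_nonneg sum_nonneg mult_nonneg_nonneg) auto
  have pw: "\<bar>gnn A W1 W2 (Suc l) Y i j - gnn A W1 W2 (Suc l) X i j\<bar>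
        \<le> c * (t + 1) * V' j * of_bool (i \<in> S) + r' i j" for i j
  proof -
    have "\<bar>gnn A W1 W2 (Suc l) Y i j - gnn A W1 W2 (Suc l) X i j\<bar>
      \<le> (\<Sum>k\<in>UNIV. \<bar>D i k\<bar> * \<bar>W1 l j k\<bar>) + (\<Sum>u\<in>UNIV. A i u * (\<Sum>k\<in>UNIV. \<bar>D u k\<bar> * \<bar>W2 l j k\<bar>))"
      using gnn_step_bound[OF Ann] unfolding D_def .
    also have "\<dots> \<le> (\<Sum>k\<in>UNIV. (c * V k * of_bool (i \<in> S) + r i k) * \<bar>W1 l j k\<bar>)
         + (\<Sum>u\<in>UNIV. A i u * (\<Sum>k\<in>UNIV. (c * V k * of_bool (u \<in> S) + r u k) * \<bar>W2 l j k\<bar>))"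
      by (intro add_mono sum_mono mult_right_mono mult_left_mono Db) (auto simp: Ann)
    also have "\<dots> = c * of_bool (i \<in> S) * a1 j + g1 i j + c * N i * a2 j + (\<Sum>u\<in>UNIV. A i u * g2 u j)"
    proof -
      have e1: "(\<Sum>k\<in>UNIV. (c * V k * of_bool (i \<in> S) + r i k) * \<bar>W1 l j k\<bar>) = c * of_bool (i \<in> S) * a1 j + g1 i j"
        unfolding a1_def g1_def by (simp add: algebra_simps sum.distrib sum_distrib_left)
      have e2: "A i u * (\<Sum>k\<in>UNIV. (c * V k * of_bool (u \<in> S) + r u k) * \<bar>W2 l j k\<bar>)
          = c * a2 j * (A i u * of_bool (u \<in> S)) + A i u * g2 u j" for u
        unfolding a2_def g2_def by (simp add: algebra_simps sum.distrib sum_distrib_left)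
      have e3: "(\<Sum>u\<in>UNIV. c * a2 j * (A i u * of_bool (u \<in> S))) = c * N i * a2 j"
        unfolding N_def sum_distrib_left[symmetric] by simp
      show ?thesis unfolding e1 e2 sum.distrib e3 by simp
    qed
    also have "\<dots> \<le> c * (t + 1) * V' j * of_bool (i \<in> S) + r' i j"
    proof (cases "i \<in> S")
      case True
      have "c * N i * a2 j \<le> c * t * a2 j" using Nt c0 a20 by (simp add: mult_left_mono mult_right_mono)
      moreover have "c * (t + 1) * V' j = c * a1 j + c * t * a2 j" unfolding V'_def using t0
        by (simp add: field_simps)
      moreover have "of_bool (i \<in> T) * c * N i * a2 j \<ge> 0" using c0 N0 a20 by simp
      moreover have "(\<Sum>u\<in>UNIV. A i u * g2 u j) \<ge> 0" using Ann g20 by (simp add: sum_nonneg)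
      moreover have "c * of_bool (i \<in> S) * a1 j = c * a1 j" "c * (t + 1) * V' j * of_bool (i \<in> S) = c * (t + 1) * V' j"
        using True by auto
      ultimately show ?thesis unfolding r'_def by linarith
    next
      case False
      hence "i \<in> T" using part by auto
      thus ?thesis using False unfolding r'_def by simp
    qed
    finally show ?thesis .
  qed
  have rs': "(\<Sum>i\<in>UNIV. \<Sum>j\<in>UNIV. r' i j) \<le> (t + 1) * B + c * d * mm"
  proof -
    define R where "R = (\<Sum>i\<in>UNIV. \<Sum>k\<in>UNIV. r i k)"
    have P1: "(\<Sum>i\<in>UNIV. \<Sum>j\<in>UNIV. g1 i j) \<le> R"
      unfolding R_def g1_def by (intro sum_mono colsum_le[OF n1]) (simp add: r0)
    have P2: "(\<Sum>i\<in>UNIV. \<Sum>j\<in>UNIV. \<Sum>u\<in>UNIV. A i u * g2 u j) \<le> t * R"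
    proof -
      have "(\<Sum>i\<in>UNIV. \<Sum>j\<in>UNIV. \<Sum>u\<in>UNIV. A i u * g2 u j) = (\<Sum>i\<in>UNIV. \<Sum>u\<in>UNIV. A i u * (\<Sum>j\<in>UNIV. g2 u j))"
        by (rule sum.cong[OF refl], subst sum.swap) (simp add: sum_distrib_left)
      also have "\<dots> = (\<Sum>u\<in>UNIV. (\<Sum>i\<in>UNIV. A i u) * (\<Sum>j\<in>UNIV. g2 u j))"
        by (subst sum.swap) (simp add: sum_distrib_right)
      also have "\<dots> = t * (\<Sum>u\<in>UNIV. \<Sum>j\<in>UNIV. g2 u j)" by (simp add: cols sum_distrib_left)
      also have "\<dots> \<le> t * R" unfolding R_def g2_def
        by (intro mult_left_mono t0 sum_mono colsum_le[OF n2]) (simp add: r0)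
      finally show ?thesis .
    qed
    have P3: "(\<Sum>i\<in>UNIV. \<Sum>j\<in>UNIV. of_bool (i \<in> T) * c * N i * a2 j) \<le> c * d * mm"
    proof -
      have "(\<Sum>i\<in>UNIV. \<Sum>j\<in>UNIV. of_bool (i \<in> T) * c * N i * a2 j)
          = c * (\<Sum>i\<in>UNIV. of_bool (i \<in> T) * N i) * (\<Sum>j\<in>UNIV. a2 j)"
      proof -
        define f where "f = (\<lambda>i. of_bool (i \<in> T) * N i)"
        have "(\<Sum>i\<in>UNIV. \<Sum>j\<in>UNIV. of_bool (i \<in> T) * c * N i * a2 j)
            = (\<Sum>i\<in>UNIV. \<Sum>j\<in>UNIV. c * f i * a2 j)" unfolding f_def by (simp add: mult.commute mult.left_commute)
        also have "\<dots> = c * (\<Sum>i\<in>UNIV. f i) * (\<Sum>j\<in>UNIV. a2 j)"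
          by (simp add: sum_distrib_left sum_distrib_right) (rule sum.swap)
        finally show ?thesis unfolding f_def .
      qed
      also have "\<dots> \<le> c * (\<Sum>i\<in>UNIV. of_bool (i \<in> T) * N i) * d"
      proof -
        have "(\<Sum>j\<in>UNIV. a2 j) \<le> d" using colsum_le[OF n2, of V] V0 Vs unfolding a2_def by auto
        moreover have "(\<Sum>i\<in>UNIV. of_bool (i \<in> T) * N i) \<ge> 0" using N0 by (intro sum_nonneg) simp
        ultimately show ?thesis using c0 by (simp add: mult_left_mono)
      qed
      also have "\<dots> = c * d * mm" using cuts unfolding N_def by simp
      finally show ?thesis .
    qed
    have "(\<Sum>i\<in>UNIV. \<Sum>j\<in>UNIV. r' i j) = (\<Sum>i\<in>UNIV. \<Sum>j\<in>UNIV. g1 i j)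
        + (\<Sum>i\<in>UNIV. \<Sum>j\<in>UNIV. \<Sum>u\<in>UNIV. A i u * g2 u j)
        + (\<Sum>i\<in>UNIV. \<Sum>j\<in>UNIV. of_bool (i \<in> T) * c * N i * a2 j)"
      unfolding r'_def by (simp only: sum.distrib)
    also have "\<dots> \<le> R + t * R + c * d * mm" using P1 P2 P3 by linarith
    also have "\<dots> \<le> (t + 1) * B + c * d * mm"
    proof -
      have "(t + 1) * R \<le> (t + 1) * B" using rs t0 unfolding R_def by (intro mult_left_mono) auto
      thus ?thesis by (simp add: algebra_simps)
    qed
    finally show ?thesis .
  qed
  show ?thesis unfolding Pr_def
    using V'0 V's r'0 rs' pw unfolding d_def by blast
qed


lemma Pr_mono: "Pr D S c B \<Longrightarrow> B \<le> B' \<Longrightarrow> Pr D S c B'"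
  unfolding Pr_def by (meson order_trans)

theorem mainTheorem9:
  fixes E :: "'v::finite \<Rightarrow> 'v \<Rightarrow> bool"
    and S T :: "'v set"
    and \<tau> m :: nat
    and X \<alpha> :: "'v \<Rightarrow> 'd::finite \<Rightarrow> real"
    and W1 W2 :: "nat \<Rightarrow> 'd \<Rightarrow> 'd \<Rightarrow> real"
    and \<epsilon> :: real
  assumes sym: "\<And>u v. E u v \<Longrightarrow> E v u"
    and irrefl: "\<And>v. \<not> E v v"
    and regular: "\<And>v. card {u. E v u} = \<tau>"
    and part: "S \<union> T = UNIV" "S \<inter> T = {}"
    and cut: "card {(u, v). u \<in> S \<and> v \<in> T \<and> E u v} = m"
    and W1n: "\<And>l. norm11 (W1 l) \<le> 1"
    and W2n: "\<And>l. norm11 (W2 l) \<le> 1"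
    and \<alpha>S: "\<And>i j. i \<in> S \<Longrightarrow> \<bar>\<alpha> i j\<bar> \<le> \<epsilon>"
    and \<alpha>T: "\<And>i j. i \<in> T \<Longrightarrow> \<alpha> i j = 0"
  shows "\<forall>l. (\<exists>V :: 'd \<Rightarrow> real. (\<forall>j. V j \<ge> 0) \<and> (\<Sum>j\<in>UNIV. V j) \<le> real (card (UNIV :: 'd set)) \<and>
            (\<exists>r :: 'v \<Rightarrow> 'd \<Rightarrow> real.
               (\<Sum>i\<in>UNIV. \<Sum>j\<in>UNIV. \<bar>r i j\<bar>)
                 \<le> 2 * real (card (UNIV :: 'd set)) * \<epsilon> * real m * real (l + 1) * (real \<tau> + 1) ^ l \<and>
               (\<forall>i j. \<bar>gnn (adj E) W1 W2 l (\<lambda>i j. X i j + \<alpha> i j) i j - gnn (adj E) W1 W2 l X i j\<bar>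
                  \<le> \<epsilon> * (real \<tau> + 1) ^ l * V j * of_bool (i \<in> S) + r i j)))
          \<and> (\<Sum>i\<in>T. \<Sum>j\<in>UNIV. \<bar>gnn (adj E) W1 W2 l (\<lambda>i j. X i j + \<alpha> i j) i j - gnn (adj E) W1 W2 l X i j\<bar>)
              \<le> 2 * real (card (UNIV :: 'd set)) * \<epsilon> * real m * real (l + 1) * (real \<tau> + 1) ^ l"
proof -
  define Y where "Y = (\<lambda>i j. X i j + \<alpha> i j)"
  define d where "d = real (card (UNIV :: 'd set))"
  define t where "t = real \<tau>"
  define D where "D = (\<lambda>l i j. gnn (adj E) W1 W2 l Y i j - gnn (adj E) W1 W2 l X i j)"
  define B where "B = (\<lambda>l::nat. 2 * d * \<epsilon> * real m * real (l + 1) * (t + 1) ^ l)"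
  have t0: "t \<ge> 0" unfolding t_def by simp
  have d0: "d \<ge> 0" unfolding d_def by simp
  have Pall: "Pr (D l) S (\<epsilon> * (t + 1) ^ l) (B l)" for l
  proof (cases "\<epsilon> \<ge> 0")
    case False
    have S0: "S = {}" using \<alpha>S False by (meson abs_ge_zero equals0I order_trans)
    hence T0: "T = UNIV" using part by auto
    have m0: "m = 0" using cut S0 by simp
    have "Y = X" unfolding Y_def using \<alpha>T T0 by auto
    hence "D l i j = 0" for i j unfolding D_def by simp
    thus ?thesis unfolding Pr_def B_def m0 S0
      by (intro exI[of _ "\<lambda>_. 0"] conjI allI exI[of _ "\<lambda>_ _. 0"]) (auto simp: d_def)
  next
    case True
    have Ann: "\<And>i u. adj E i u \<ge> 0" by (simp add: adj_def)
    show ?thesis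
    proof (induction l)
      case 0
      have "\<bar>D 0 i j\<bar> \<le> \<epsilon> * (t + 1) ^ 0 * 1 * of_bool (i \<in> S) + 0" for i j
        using \<alpha>S \<alpha>T part unfolding D_def Y_def by (cases "i \<in> S") auto
      moreover have "B 0 \<ge> 0" unfolding B_def using True d0 by simp
      ultimately show ?case unfolding Pr_def
        by (intro exI[of _ "\<lambda>_. 1"] conjI allI exI[of _ "\<lambda>_ _. 0"]) (auto simp: d_def)
    next
      case (Suc l)
      have "Pr (D (Suc l)) S (\<epsilon> * (t + 1) ^ l * (t + 1)) ((t + 1) * B l + \<epsilon> * (t + 1) ^ l * d * real m)"
        unfolding D_def d_def t_def
        by (rule step[OF Ann rowsum[OF regular] colsum[OF sym regular] cutsum[OF sym part cut] part(1)
              W1n W2n _ _ Suc[unfolded D_def t_def]])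
           (use True in auto)
      moreover have "(t + 1) * B l + \<epsilon> * (t + 1) ^ l * d * real m \<le> B (Suc l)"
      proof -
        have k: "0 \<le> \<epsilon> * (t + 1) ^ l * d * real m" using True t0 d0 by simp
        have "B (Suc l) = (t + 1) * B l + 2 * (t + 1) * (\<epsilon> * (t + 1) ^ l * d * real m)"
          unfolding B_def by (simp add: algebra_simps)
        moreover have "\<epsilon> * (t + 1) ^ l * d * real m \<le> 2 * (t + 1) * (\<epsilon> * (t + 1) ^ l * d * real m)"
          using k t0 by (simp add: mult_le_cancel_right1)
        ultimately show ?thesis by linarith
      qed
      ultimately have P: "Pr (D (Suc l)) S (\<epsilon> * (t + 1) ^ l * (t + 1)) (B (Suc l))"
        by (rule Pr_mono)
      have e: "\<epsilon> * (t + 1) ^ l * (t + 1) = \<epsilon> * (t + 1) ^ Suc l"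
        by (simp only: power_Suc2 mult.assoc)
      show ?case using P unfolding e .
    qed
  qed
  show ?thesis
  proof
    fix l
    obtain V r where V0: "\<forall>j. V j \<ge> 0" and Vs: "(\<Sum>j\<in>UNIV. V j) \<le> d"
      and r0: "\<forall>i j. r i j \<ge> 0" and rs: "(\<Sum>i\<in>UNIV. \<Sum>j\<in>UNIV. r i j) \<le> B l"
      and Db: "\<forall>i j. \<bar>D l i j\<bar> \<le> \<epsilon> * (t + 1) ^ l * V j * of_bool (i \<in> S) + r i j"
      using Pall[of l] unfolding Pr_def d_def by blast
    have ra: "\<bar>r i j\<bar> = r i j" for i j using r0 by simp
    have Tb: "(\<Sum>i\<in>T. \<Sum>j\<in>UNIV. \<bar>D l i j\<bar>) \<le> B l"
    proof -
      have "(\<Sum>i\<in>T. \<Sum>j\<in>UNIV. \<bar>D l i j\<bar>) \<le> (\<Sum>i\<in>T. \<Sum>j\<in>UNIV. r i j)"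
      proof (intro sum_mono)
        fix i j assume "i \<in> T"
        hence "i \<notin> S" using part by auto
        thus "\<bar>D l i j\<bar> \<le> r i j" using Db[rule_format, of i j] by simp
      qed
      also have "\<dots> \<le> (\<Sum>i\<in>UNIV. \<Sum>j\<in>UNIV. r i j)"
        by (rule sum_mono2) (auto intro: sum_nonneg simp: r0)
      finally show ?thesis using rs by simp
    qed
    show "(\<exists>V :: 'd \<Rightarrow> real. (\<forall>j. V j \<ge> 0) \<and> (\<Sum>j\<in>UNIV. V j) \<le> real (card (UNIV :: 'd set)) \<and>
            (\<exists>r :: 'v \<Rightarrow> 'd \<Rightarrow> real.
               (\<Sum>i\<in>UNIV. \<Sum>j\<in>UNIV. \<bar>r i j\<bar>)
                 \<le> 2 * real (card (UNIV :: 'd set)) * \<epsilon> * real m * real (l + 1) * (real \<tau> + 1) ^ l \<and>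
               (\<forall>i j. \<bar>gnn (adj E) W1 W2 l (\<lambda>i j. X i j + \<alpha> i j) i j - gnn (adj E) W1 W2 l X i j\<bar>
                  \<le> \<epsilon> * (real \<tau> + 1) ^ l * V j * of_bool (i \<in> S) + r i j)))
          \<and> (\<Sum>i\<in>T. \<Sum>j\<in>UNIV. \<bar>gnn (adj E) W1 W2 l (\<lambda>i j. X i j + \<alpha> i j) i j - gnn (adj E) W1 W2 l X i j\<bar>)
              \<le> 2 * real (card (UNIV :: 'd set)) * \<epsilon> * real m * real (l + 1) * (real \<tau> + 1) ^ l"
    proof -
      have G1: "\<forall>i j. \<bar>gnn (adj E) W1 W2 l (\<lambda>i j. X i j + \<alpha> i j) i j - gnn (adj E) W1 W2 l X i j\<bar>
                  \<le> \<epsilon> * (real \<tau> + 1) ^ l * V j * of_bool (i \<in> S) + r i j"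
        using Db unfolding D_def Y_def t_def .
      have G2: "(\<Sum>i\<in>UNIV. \<Sum>j\<in>UNIV. \<bar>r i j\<bar>)
                 \<le> 2 * real (card (UNIV :: 'd set)) * \<epsilon> * real m * real (l + 1) * (real \<tau> + 1) ^ l"
        using rs unfolding ra B_def d_def t_def .
      have G3: "(\<Sum>i\<in>T. \<Sum>j\<in>UNIV. \<bar>gnn (adj E) W1 W2 l (\<lambda>i j. X i j + \<alpha> i j) i j - gnn (adj E) W1 W2 l X i j\<bar>)
              \<le> 2 * real (card (UNIV :: 'd set)) * \<epsilon> * real m * real (l + 1) * (real \<tau> + 1) ^ l"
        using Tb unfolding D_def Y_def B_def d_def t_def .
      have V1: "(\<Sum>j\<in>UNIV. V j) \<le> real (card (UNIV :: 'd set))" using Vs unfolding d_def .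
      show ?thesis
        by (rule conjI[OF exI[of _ V] G3], rule conjI[OF V0 conjI[OF V1 exI[of _ r]]], rule conjI[OF G2 G1])
    qed
  qed
qed

end
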